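(* Let $X=\prod_{i\in I}X_i$ be a topological product and suppose that a subspace $Y$ of $X$ fills all finite subproducts of $X$. If $Y$ is a $T_3$-space, then each factor $X_i$ is also a $T_3$-space.
   Context: For nonempty $J\subseteq I$, $\pi_J\colon X\to X_J=\prod_{i\in J}X_i$ is the projection. A set $Y\subseteq X$ fills finite subproducts of $X$ if $\pi_J(Y)=X_J$ for every finite nonempty $J\subseteq I$. A space is $T_3$ if every open neighborhood $U$ of a point $x$ contains an open neighborhood $V$ of $x$ with $\overline{V}\subseteq U$ (no $T_1$ assumed). *)

theory Defs
  imports "HOL-Analysis.Analysis"
begin

text \<open>T3 in the sense of the paper (no T1 assumed): every open neighbourhood U of a
point x contains an open neighbourhood V of x whose closure lies in U.\<close>
definition T3_space :: "'a topology \<Rightarrow> bool" where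
  "T3_space T \<longleftrightarrow>
     (\<forall>x U. openin T U \<and> x \<in> U \<longrightarrow>
        (\<exists>V. openin T V \<and> x \<in> V \<and> T closure_of V \<subseteq> U))"

text \<open>Y fills finite subproducts of the product over I: the projection onto every
finite nonempty subproduct J (realised as restriction to J) maps Y onto X_J.\<close>
definition fills_finite_subproducts :: "('i \<Rightarrow> 'a topology) \<Rightarrow> 'i set \<Rightarrow> ('i \<Rightarrow> 'a) set \<Rightarrow> bool" where
  "fills_finite_subproducts X I Y \<longleftrightarrow>
     (\<forall>J. finite J \<and> J \<noteq> {} \<and> J \<subseteq> I \<longrightarrow>
        (\<lambda>y. restrict y J) ` Y = topspace (product_topology X J))"

end

theory Submission
  imports Defs
begin

theorem proposition3p2:
  fixes X :: "'i \<Rightarrow> 'a topology" and I :: "'i set" and Y :: "('i \<Rightarrow> 'a) set"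
  assumes "Y \<subseteq> topspace (product_topology X I)"
    and "fills_finite_subproducts X I Y"
    and "T3_space (subtopology (product_topology X I) Y)"
  shows "\<forall>i\<in>I. T3_space (X i)"
proof
  fix i assume iI: "i \<in> I"
  let ?P = "product_topology X I"
  let ?S = "subtopology ?P Y"
  have fill: "\<And>J. finite J \<Longrightarrow> J \<noteq> {} \<Longrightarrow> J \<subseteq> I \<Longrightarrow>
      (\<lambda>y. restrict y J) ` Y = (\<Pi>\<^sub>E k\<in>J. topspace (X k))"
    using assms(2) unfolding fills_finite_subproducts_def topspace_product_topology by blast
  have Ytop: "\<And>w. w \<in> Y \<Longrightarrow> w \<in> (\<Pi>\<^sub>E k\<in>I. topspace (X k))"
    using assms(1) by (metis subsetD topspace_product_topology)
  show "T3_space (X i)"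
    unfolding T3_space_def
  proof (intro allI impI, elim conjE)
    fix x U assume U: "openin (X i) U" and xU: "x \<in> U"
    have xt: "x \<in> topspace (X i)" using U xU openin_subset by blast
    have "restrict (\<lambda>_. x) {i} \<in> (\<Pi>\<^sub>E k\<in>{i}. topspace (X k))" using xt by auto
    then have "restrict (\<lambda>_. x) {i} \<in> (\<lambda>y. restrict y {i}) ` Y"
      using fill[of "{i}"] iI by simp
    then obtain y where yY: "y \<in> Y" and "restrict y {i} = restrict (\<lambda>_. x) {i}"
      by auto
    then have yi: "y i = x" by (metis restrict_apply' singletonI)
    define W where "W = {z\<in>topspace ?P. z i \<in> U} \<inter> Y"
    have "openin ?P {z\<in>topspace ?P. z i \<in> U}"
      by (rule openin_continuous_map_preimage[OF continuous_map_product_projection[OF iI, of X] U])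
    then have Wo: "openin ?S W" unfolding W_def openin_subtopology by blast
    have yW: "y \<in> W" unfolding W_def using yY yi xU Ytop[OF yY] topspace_product_topology by auto
    obtain V where Vo: "openin ?S V" and yV: "y \<in> V" and clV: "?S closure_of V \<subseteq> W"
      using assms(3) Wo yW unfolding T3_space_def by blast
    obtain Q1 where Oo: "openin ?P Q1" and VO: "V = Q1 \<inter> Y" using Vo unfolding openin_subtopology by blast
    have "y \<in> Q1" using yV VO by blast
    then obtain B where Bfin: "finite {k \<in> I. B k \<noteq> topspace (X k)}"
      and Bo: "\<forall>k\<in>I. openin (X k) (B k)" and yB: "y \<in> Pi\<^sub>E I B" and BO: "Pi\<^sub>E I B \<subseteq> Q1"
      using Oo unfolding openin_product_topology_alt by blast
    define K where "K = {k \<in> I. B k \<noteq> topspace (X k)}"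
    show "\<exists>V. openin (X i) V \<and> x \<in> V \<and> X i closure_of V \<subseteq> U"
    proof (intro exI conjI)
      show "openin (X i) (B i)" using Bo iI by blast
      show "x \<in> B i" using yB yi iI by auto
      show "X i closure_of B i \<subseteq> U"
      proof
        fix p assume pcl: "p \<in> X i closure_of B i"
        show "p \<in> U"
        proof (rule ccontr)
          assume pU: "p \<notin> U"
          have pt: "p \<in> topspace (X i)" using pcl in_closure_of by fast
          define F where "F = insert i K"
          have Ffin: "finite F" and FI: "F \<subseteq> I" unfolding F_def K_def using Bfin iI by auto
          have "restrict (y(i:=p)) F \<in> (\<Pi>\<^sub>E k\<in>F. topspace (X k))"
            using pt Ytop[OF yY] FI by (auto simp: PiE_iff)
          then have "restrict (y(i:=p)) F \<in> (\<lambda>y. restrict y F) ` Y"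
            using fill[OF Ffin _ FI] unfolding F_def by simp
          then obtain z where zY: "z \<in> Y" and zr: "restrict z F = restrict (y(i:=p)) F"
            by auto
          have zF: "\<And>k. k \<in> F \<Longrightarrow> z k = (y(i:=p)) k"
            using zr by (metis restrict_apply')
          have zi: "z i = p" using zF[of i] unfolding F_def by simp
          have "z \<notin> W" unfolding W_def using zi pU by auto
          then have "z \<notin> ?S closure_of V" using clV by blast
          moreover have "z \<in> topspace ?S" using zY assms(1) by auto
          ultimately obtain T' where zT': "z \<in> T'" and T'o: "openin ?S T'" and T'V: "\<forall>w. w \<in> V \<longrightarrow> w \<notin> T'"
            unfolding in_closure_of by blast
          obtain Q2 where Q2o: "openin ?P Q2" and T'Q2: "T' = Q2 \<inter> Y"
            using T'o unfolding openin_subtopology by blast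
          have "z \<in> Q2" using zT' T'Q2 by blast
          then obtain N where Nfin: "finite {k \<in> I. N k \<noteq> topspace (X k)}"
            and No: "\<forall>k\<in>I. openin (X k) (N k)" and zN: "z \<in> Pi\<^sub>E I N" and NO: "Pi\<^sub>E I N \<subseteq> Q2"
            using Q2o unfolding openin_product_topology_alt by blast
          define M where "M = F \<union> {k \<in> I. N k \<noteq> topspace (X k)}"
          have Mfin: "finite M" and MI: "M \<subseteq> I" and iM: "i \<in> M"
            unfolding M_def using Ffin FI Nfin F_def by auto
          have "z i \<in> N i" using zN iI by auto
          then obtain a where aB: "a \<in> B i" and aN: "a \<in> N i"
            using pcl No iI zi unfolding in_closure_of by blast
          have at: "a \<in> topspace (X i)" using aB Bo iI openin_subset by blast
          have zt: "z \<in> (\<Pi>\<^sub>E k\<in>I. topspace (X k))" using Ytop[OF zY] .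
          have "restrict (z(i:=a)) M \<in> (\<Pi>\<^sub>E k\<in>M. topspace (X k))"
            using at zt MI by (auto simp: PiE_iff)
          then have "restrict (z(i:=a)) M \<in> (\<lambda>y. restrict y M) ` Y"
            using fill[OF Mfin _ MI] iM by (metis empty_iff)
          then obtain w where wY: "w \<in> Y" and wr: "restrict w M = restrict (z(i:=a)) M"
            by auto
          have wM: "\<And>k. k \<in> M \<Longrightarrow> w k = (z(i:=a)) k"
            using wr by (metis restrict_apply')
          have wt: "w \<in> (\<Pi>\<^sub>E k\<in>I. topspace (X k))" using Ytop[OF wY] .
          have wB: "w \<in> Pi\<^sub>E I B"
          proof -
            have "w k \<in> B k" if kI: "k \<in> I" for k
            proof (cases "k \<in> K")
              case True
              then have kF: "k \<in> F" "k \<in> M" unfolding F_def M_def by auto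
              show ?thesis
              proof (cases "k = i")
                case True then show ?thesis using wM[OF kF(2)] aB by simp
              next
                case False then show ?thesis using wM[OF kF(2)] zF[OF kF(1)] yB kI by auto
              qed
            next
              case False
              then have "B k = topspace (X k)" unfolding K_def using kI by auto
              then show ?thesis using wt kI by auto
            qed
            moreover have "w \<in> extensional I" using wt by (simp add: PiE_iff)
            ultimately show ?thesis by (simp add: PiE_iff)
          qed
          have wN: "w \<in> Pi\<^sub>E I N"
          proof -
            have "w k \<in> N k" if kI: "k \<in> I" for k
            proof (cases "N k = topspace (X k)")
              case True
              then show ?thesis using wt kI by auto
            next
              case False
              then have kM: "k \<in> M" unfolding M_def using kI by auto
              show ?thesis
              proof (cases "k = i")
                case True then show ?thesis using wM[OF kM] aN by simp
              next
                case False then show ?thesis using wM[OF kM] zN kI by auto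
              qed
            qed
            moreover have "w \<in> extensional I" using wt by (simp add: PiE_iff)
            ultimately show ?thesis by (simp add: PiE_iff)
          qed
          have "w \<in> V" using VO BO wB wY by blast
          moreover have "w \<in> T'" using T'Q2 NO wN wY by blast
          ultimately show False using T'V by blast
        qed
      qed
    qed
  qed
qed

end
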